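(* Let $U$ be the $4\times 15$ matrix over $\mathbb{F}_2$ whose columns are all $15$ nonzero vectors of $\mathbb{F}_2^4$, let $B_1=I_4$ and $B_2=\operatorname{diag}\!\left(\begin{bmatrix}0&1\\1&0\end{bmatrix},\begin{bmatrix}0&1\\1&0\end{bmatrix}\right)$, and let $F2R4A=\Gamma(U^tB_1U)$ and $F2R4B=\Gamma(U^tB_2U)$. Then a simple graph $G$ satisfies $\operatorname{mr}(\mathbb{F}_2,G)\le4$ if and only if $G$ is a blowup of $F2R4A\cup K_1$ or of $F2R4B\cup K_1$, where $K_1$ is a single isolated nonlooped vertex.
   Context: For a symmetric $n\times n$ matrix $A$, the looped graph corresponding to $A$, $\Gamma(A)$, has vertex set $\{1,\dots,n\}$, an edge $ij$ ($i\neq j$) iff $a_{ij}\neq0$, and a loop at $i$ iff $a_{ii}\ne 0$. For a simple graph $G$, $\operatorname{mr}(F,G)$ is the minimum rank of a symmetric matrix $A$ over $F$ with $a_{ij}\neq0$ for $i\ne j$ iff $ij$ is an edge of $G$ (diagonal unrestricted). A blowup of a looped graph $G$ with vertices $v_1,\dots,v_n$ is a simple graph obtained by replacing each nonlooped vertex $v_i$ by a (possibly empty) independent set $V_i$, each looped vertex $v_i$ by a (possibly empty) clique $V_i$, and each edge $v_iv_j$ ($i\ne j$) by all edges $xy$ with $x\in V_i$, $y\in V_j$. *)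

theory Defs
  imports "HOL-Library.Z2" "Jordan_Normal_Form.DL_Rank"
begin

definition simple_graph :: "nat \<Rightarrow> (nat \<Rightarrow> nat \<Rightarrow> bool) \<Rightarrow> bool" where
  "simple_graph n E \<longleftrightarrow> (\<forall>x<n. \<forall>y<n. E x y = E y x) \<and> (\<forall>x<n. \<not> E x x)"

text \<open>Minimum rank over F_2 (the field type bit) of symmetric matrices
  with the off-diagonal zero pattern of the graph; diagonal unrestricted.\<close>
definition mr_F2 :: "nat \<Rightarrow> (nat \<Rightarrow> nat \<Rightarrow> bool) \<Rightarrow> nat" where
  "mr_F2 n E = (LEAST r. \<exists>A :: bit mat. A \<in> carrier_mat n n \<and> transpose_mat A = A \<and>
      (\<forall>i<n. \<forall>j<n. i \<noteq> j \<longrightarrow> (A $$ (i,j) \<noteq> 0 \<longleftrightarrow> E i j)) \<and>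
      vec_space.rank n A = r)"

text \<open>Looped graphs: number of vertices m (vertices {0..<m}) and an adjacency
  relation L; L i i means vertex i has a loop.\<close>
type_synonym looped_graph = "nat \<times> (nat \<Rightarrow> nat \<Rightarrow> bool)"

definition Gamma :: "'a::zero mat \<Rightarrow> looped_graph" where
  "Gamma A = (dim_row A, \<lambda>i j. A $$ (i,j) \<noteq> 0)"

text \<open>Disjoint union with K_1: a new isolated nonlooped vertex m.\<close>
definition union_K1 :: "looped_graph \<Rightarrow> looped_graph" where
  "union_K1 H = (fst H + 1, \<lambda>i j. i < fst H \<and> j < fst H \<and> snd H i j)"

text \<open>G (on {0..<n}) is a blowup of H: vertex x of G lies in the part V_(f x).\<close>
definition is_blowup :: "nat \<Rightarrow> (nat \<Rightarrow> nat \<Rightarrow> bool) \<Rightarrow> looped_graph \<Rightarrow> bool" where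
  "is_blowup n E H \<longleftrightarrow> (\<exists>f. (\<forall>x<n. f x < fst H) \<and>
      (\<forall>x<n. \<forall>y<n. x \<noteq> y \<longrightarrow> (E x y \<longleftrightarrow> snd H (f x) (f y))))"

text \<open>Column j of U is the binary expansion of j+1 (bit i in row i), so the
  columns are exactly the 15 nonzero vectors of F_2^4.\<close>
definition U_mat :: "bit mat" where
  "U_mat = mat 4 15 (\<lambda>(i,j). if odd ((j + 1) div 2 ^ i) then 1 else 0)"

definition B1_mat :: "bit mat" where
  "B1_mat = 1\<^sub>m 4"

definition B2_mat :: "bit mat" where
  "B2_mat = mat 4 4 (\<lambda>(i,j). if (i,j) \<in> {(0,1),(1,0),(2,3),(3,2)} then 1 else 0)"

definition F2R4A :: looped_graph where
  "F2R4A = Gamma (transpose_mat U_mat * B1_mat * U_mat)"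

definition F2R4B :: looped_graph where
  "F2R4B = Gamma (transpose_mat U_mat * B2_mat * U_mat)"

end

theory Submission
  imports Defs
begin


declare add_bit_eq_xor[simp del] mult_bit_eq_and[simp del] minus_bit_def[simp del] uminus_bit_def[simp del]

definition indep :: "nat \<Rightarrow> (nat \<Rightarrow> nat \<Rightarrow> 'a::field) \<Rightarrow> nat set \<Rightarrow> bool" where
  "indep n a P = (\<forall>c. (\<forall>x<n. (\<Sum>p\<in>P. c p * a x p) = 0) \<longrightarrow> (\<forall>p\<in>P. c p = 0))"

definition nzrows :: "nat \<Rightarrow> (nat \<Rightarrow> nat \<Rightarrow> 'a::zero) \<Rightarrow> nat set" where
  "nzrows n a = {x. x < n \<and> (\<exists>y<n. a x y \<noteq> 0)}"

definition decomp :: "nat \<Rightarrow> (nat \<Rightarrow> nat \<Rightarrow> 'a::comm_ring) \<Rightarrow> nat \<Rightarrow> nat \<Rightarrow> (nat \<Rightarrow> nat \<Rightarrow> 'a)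
   \<Rightarrow> (nat \<Rightarrow> nat \<Rightarrow> 'a) \<Rightarrow> (nat \<Rightarrow> nat \<Rightarrow> 'a) \<Rightarrow> bool" where
  "decomp n a s h v u w = (\<forall>x<n. \<forall>y<n. a x y = (\<Sum>k<s. v k x * v k y) + (\<Sum>k<h. u k x * w k y + w k x * u k y))"

lemma sum_lin2: "(\<Sum>p\<in>P. c p * (f p - (\<alpha> * g p + \<beta> * k p))) =
   (\<Sum>p\<in>P. c p * f p) - (\<alpha> * (\<Sum>p\<in>P. c p * g p) + \<beta> * (\<Sum>p\<in>P. c p * k p))"
  for c f g k :: "nat \<Rightarrow> 'a::comm_ring"
  by (simp add: algebra_simps sum_subtractf sum.distrib sum_distrib_left)

lemma sum_lin1: "(\<Sum>p\<in>P. c p * (f p - \<alpha> * g p)) =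
   (\<Sum>p\<in>P. c p * f p) - \<alpha> * (\<Sum>p\<in>P. c p * g p)"
  for c f g :: "nat \<Rightarrow> 'a::comm_ring"
  by (simp add: algebra_simps sum_subtractf sum_distrib_left)

lemma indep_zero_col:
  assumes "indep n b P" "q \<in> P" "finite P" "\<forall>x<n. b x q = 0"
  shows False
proof -
  define c where "c p = (if p = q then 1 else (0::'a))" for p :: nat
  have "\<forall>x<n. (\<Sum>p\<in>P. c p * b x p) = 0"
  proof (intro allI impI)
    fix x assume "x < n"
    have "(\<Sum>p\<in>P. c p * b x p) = (\<Sum>p\<in>{q}. c p * b x p)"
      by (rule sum.mono_neutral_right) (use assms in \<open>auto simp: c_def\<close>)
    then show "(\<Sum>p\<in>P. c p * b x p) = 0" using assms \<open>x<n\<close> by (simp add: c_def)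
  qed
  then have "c q = 0" using assms unfolding indep_def by blast
  then show False by (simp add: c_def)
qed

lemma bit1: "(x::bit) \<noteq> 0 \<Longrightarrow> x = 1" by simp

lemma elim:
  fixes a :: "nat \<Rightarrow> nat \<Rightarrow> bit"
  assumes "\<forall>x<n. \<forall>y<n. a x y = a y x"
  shows "\<exists>s h v u w P. decomp n a s h v u w \<and> P \<subseteq> {..<n} \<and> card P = s + 2*h \<and> indep n a P"
  using assms
proof (induction "card (nzrows n a)" arbitrary: a rule: less_induct)
  case less
  note sym = less.prems
  have finnz: "finite (nzrows n b)" for b :: "nat \<Rightarrow> nat \<Rightarrow> bit"
    by (rule finite_subset[of _ "{..<n}"]) (auto simp: nzrows_def)
  consider (z) "\<forall>x<n. \<forall>y<n. a x y = 0" | (d) i where "i < n" "a i i \<noteq> 0"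
    | (o) i j where "i < n" "j < n" "a i j \<noteq> 0" "\<forall>x<n. a x x = 0" by blast
  then show ?case
  proof cases
    case z
    show ?thesis
      by (rule exI[of _ 0], rule exI[of _ 0], rule exI[of _ undefined], rule exI[of _ undefined],
          rule exI[of _ undefined], rule exI[of _ "{}"]) (use z in \<open>auto simp: decomp_def indep_def\<close>)
  next
    case d
    have aii: "a i i = 1" using d by simp
    define b where "b x y = a x y - a x i * a y i" for x y
    have symb: "\<forall>x<n. \<forall>y<n. b x y = b y x" using sym by (auto simp: b_def mult.commute)
    have rowi: "b i y = 0" if "y < n" for y using sym that d(1) by (simp add: b_def aii)
    have sub: "nzrows n b \<subseteq> nzrows n a - {i}"
    proof
      fix x assume x: "x \<in> nzrows n b"
      then obtain y where y: "x < n" "y < n" "b x y \<noteq> 0" by (auto simp: nzrows_def)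
      then have "x \<noteq> i" using rowi by auto
      moreover have "x \<in> nzrows n a"
      proof (rule ccontr)
        assume "x \<notin> nzrows n a"
        then have "a x y = 0" "a x i = 0" using y d(1) by (auto simp: nzrows_def)
        then show False using y by (simp add: b_def)
      qed
      ultimately show "x \<in> nzrows n a - {i}" by blast
    qed
    have "i \<in> nzrows n a" using d by (auto simp: nzrows_def)
    then have "card (nzrows n b) < card (nzrows n a)"
      using card_mono[OF _ sub] finnz card_Diff1_less[OF finnz]
      by (meson finite_Diff le_less_trans)
    then obtain s h v u w P where IH: "decomp n b s h v u w" "P \<subseteq> {..<n}" "card P = s + 2*h" "indep n b P"
      using less.hyps symb by blast
    have finP: "finite P" using IH(2) finite_subset by blast
    have iP: "i \<notin> P"
    proof
      assume "i \<in> P"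
      then show False using indep_zero_col[OF IH(4) _ finP, of i] rowi symb d(1) by auto
    qed
    show ?thesis
    proof (intro exI conjI)
      show "decomp n a (Suc s) h (case_nat (\<lambda>x. a x i) v) u w"
        unfolding decomp_def
      proof (intro allI impI)
        fix x y assume xy: "x < n" "y < n"
        have "a x y = b x y + a x i * a y i" by (simp add: b_def)
        also have "b x y = (\<Sum>k<s. v k x * v k y) + (\<Sum>k<h. u k x * w k y + w k x * u k y)"
          using IH(1) xy unfolding decomp_def by blast
        finally show "a x y = (\<Sum>k<Suc s. case_nat (\<lambda>x. a x i) v k x * case_nat (\<lambda>x. a x i) v k y)
             + (\<Sum>k<h. u k x * w k y + w k x * u k y)"
          by (simp only: sum.lessThan_Suc_shift nat.case) (simp add: algebra_simps)
      qed
      show "insert i P \<subseteq> {..<n}" using IH(2) d(1) by auto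
      show "card (insert i P) = Suc s + 2 * h" using IH(3) iP finP by simp
      show "indep n a (insert i P)" unfolding indep_def
      proof (intro allI impI ballI)
        fix c p assume H: "\<forall>x<n. (\<Sum>p\<in>insert i P. c p * a x p) = 0" and p: "p \<in> insert i P"
        have H': "c i * a x i + (\<Sum>p\<in>P. c p * a x p) = 0" if "x < n" for x
          using H that iP finP by (simp add: sum.insert)
        define \<beta> where "\<beta> = (\<Sum>p\<in>P. c p * a p i)"
        have sP: "(\<Sum>p\<in>P. c p * a i p) = \<beta>"
          unfolding \<beta>_def using sym IH(2) d(1) by (intro sum.cong) auto
        have ci: "c i + \<beta> = 0" using H'[OF d(1)] sP aii by simp
        have "\<forall>x<n. (\<Sum>p\<in>P. c p * b x p) = 0"
        proof (intro allI impI)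
          fix x assume x: "x < n"
          have "(\<Sum>p\<in>P. c p * b x p) = (\<Sum>p\<in>P. c p * a x p) - a x i * \<beta>"
            unfolding b_def \<beta>_def by (rule sum_lin1)
          also have "\<dots> = - (a x i * (c i + \<beta>))" using H'[OF x]
            by (simp add: algebra_simps eq_neg_iff_add_eq_0 add.commute)
          also have "\<dots> = 0" using ci by simp
          finally show "(\<Sum>p\<in>P. c p * b x p) = 0" .
        qed
        then have cP: "\<forall>p\<in>P. c p = 0" using IH(4) unfolding indep_def by blast
        then have "\<beta> = 0" unfolding \<beta>_def by simp
        then have "c i = 0" using ci by simp
        then show "c p = 0" using cP p by auto
      qed
    qed
  next
    case o
    have aij: "a i j = 1" and aji: "a j i = 1" using o sym by auto
    have aii: "a i i = 0" and ajj: "a j j = 0" using o by auto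
    have ij: "i \<noteq> j" using o by auto
    define b where "b x y = a x y - (a x i * a y j + a x j * a y i)" for x y
    have symb: "\<forall>x<n. \<forall>y<n. b x y = b y x" using sym by (auto simp: b_def mult.commute add.commute)
    have rowi: "b i y = 0" if "y < n" for y using sym that o(1) by (simp add: b_def aii aij)
    have rowj: "b j y = 0" if "y < n" for y using sym that o(2) by (simp add: b_def ajj aji)
    have sub: "nzrows n b \<subseteq> nzrows n a - {i}"
    proof
      fix x assume x: "x \<in> nzrows n b"
      then obtain y where y: "x < n" "y < n" "b x y \<noteq> 0" by (auto simp: nzrows_def)
      then have "x \<noteq> i" using rowi by auto
      moreover have "x \<in> nzrows n a"
      proof (rule ccontr)
        assume "x \<notin> nzrows n a"
        then have "a x y = 0" "a x i = 0" "a x j = 0" using y o(1,2) by (auto simp: nzrows_def)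
        then show False using y by (simp add: b_def)
      qed
      ultimately show "x \<in> nzrows n a - {i}" by blast
    qed
    have "i \<in> nzrows n a" using o by (auto simp: nzrows_def)
    then have "card (nzrows n b) < card (nzrows n a)"
      using card_mono[OF _ sub] finnz card_Diff1_less[OF finnz]
      by (meson finite_Diff le_less_trans)
    then obtain s h v u w P where IH: "decomp n b s h v u w" "P \<subseteq> {..<n}" "card P = s + 2*h" "indep n b P"
      using less.hyps symb by blast
    have finP: "finite P" using IH(2) finite_subset by blast
    have iP: "i \<notin> P"
    proof
      assume "i \<in> P"
      then show False using indep_zero_col[OF IH(4) _ finP, of i] rowi symb o(1) by auto
    qed
    have jP: "j \<notin> P"
    proof
      assume "j \<in> P"
      then show False using indep_zero_col[OF IH(4) _ finP, of j] rowj symb o(2) by auto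
    qed
    show ?thesis
    proof (intro exI conjI)
      show "decomp n a s (Suc h) v (case_nat (\<lambda>x. a x i) u) (case_nat (\<lambda>x. a x j) w)"
        unfolding decomp_def
      proof (intro allI impI)
        fix x y assume xy: "x < n" "y < n"
        have "a x y = b x y + (a x i * a y j + a x j * a y i)" by (simp add: b_def)
        also have "b x y = (\<Sum>k<s. v k x * v k y) + (\<Sum>k<h. u k x * w k y + w k x * u k y)"
          using IH(1) xy unfolding decomp_def by blast
        finally show "a x y = (\<Sum>k<s. v k x * v k y) + (\<Sum>k<Suc h. case_nat (\<lambda>x. a x i) u k x * case_nat (\<lambda>x. a x j) w k y
             + case_nat (\<lambda>x. a x j) w k x * case_nat (\<lambda>x. a x i) u k y)"
          by (simp only: sum.lessThan_Suc_shift nat.case) (simp add: algebra_simps)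
      qed
      show "insert i (insert j P) \<subseteq> {..<n}" using IH(2) o(1,2) by auto
      show "card (insert i (insert j P)) = s + 2 * Suc h" using IH(3) iP jP ij finP by simp
      show "indep n a (insert i (insert j P))" unfolding indep_def
      proof (intro allI impI ballI)
        fix c p assume H: "\<forall>x<n. (\<Sum>p\<in>insert i (insert j P). c p * a x p) = 0"
          and p: "p \<in> insert i (insert j P)"
        have H': "c i * a x i + (c j * a x j + (\<Sum>p\<in>P. c p * a x p)) = 0" if "x < n" for x
          using H that iP jP ij finP by (simp add: sum.insert)
        define \<beta>i where "\<beta>i = (\<Sum>p\<in>P. c p * a p i)"
        define \<beta>j where "\<beta>j = (\<Sum>p\<in>P. c p * a p j)"
        have sPi: "(\<Sum>p\<in>P. c p * a i p) = \<beta>i"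
          unfolding \<beta>i_def using sym IH(2) o(1) by (intro sum.cong) auto
        have sPj: "(\<Sum>p\<in>P. c p * a j p) = \<beta>j"
          unfolding \<beta>j_def using sym IH(2) o(2) by (intro sum.cong) auto
        have cj: "c j + \<beta>i = 0" using H'[OF o(1)] sPi aii aij by simp
        have ci: "c i + \<beta>j = 0" using H'[OF o(2)] sPj ajj aji by simp
        have "\<forall>x<n. (\<Sum>p\<in>P. c p * b x p) = 0"
        proof (intro allI impI)
          fix x assume x: "x < n"
          have "(\<Sum>p\<in>P. c p * b x p) = (\<Sum>p\<in>P. c p * a x p) - (a x i * \<beta>j + a x j * \<beta>i)"
            unfolding b_def \<beta>i_def \<beta>j_def by (rule sum_lin2)
          also have "\<dots> = - (a x i * (c i + \<beta>j) + a x j * (c j + \<beta>i))" using H'[OF x]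
            by (simp add: algebra_simps eq_neg_iff_add_eq_0 add.commute)
          also have "\<dots> = 0" using ci cj by simp
          finally show "(\<Sum>p\<in>P. c p * b x p) = 0" .
        qed
        then have cP: "\<forall>p\<in>P. c p = 0" using IH(4) unfolding indep_def by blast
        then have "\<beta>i = 0" "\<beta>j = 0" unfolding \<beta>i_def \<beta>j_def by simp_all
        then have "c i = 0" "c j = 0" using ci cj by simp_all
        then show "c p = 0" using cP p by auto
      qed
    qed
  qed
qed




lemma sum_set_nth: "distinct ps \<Longrightarrow> sum g (set ps) = (\<Sum>t<length ps. g (ps ! t))"
proof -
  assume d: "distinct ps"
  have "set ps = (!) ps ` {..<length ps}" by (auto simp: set_conv_nth)
  moreover have "inj_on ((!) ps) {..<length ps}" using d by (simp add: inj_on_nth)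
  ultimately show ?thesis by (simp add: sum.reindex)
qed

context vec_space begin

lemma indep_rank:
  assumes A: "A \<in> carrier_mat n n" and P: "P \<subseteq> {..<n}" and ind: "indep n (\<lambda>x y. A $$ (x,y)) P"
  shows "card P \<le> rank A"
proof -
  have fin: "finite P" using P finite_subset by blast
  define ps where "ps = sorted_list_of_set P"
  define m where "m = card P"
  have dps: "distinct ps" and sps: "set ps = P" and lps: "length ps = m"
    using fin by (auto simp: ps_def m_def)
  have psn: "\<And>t. t < m \<Longrightarrow> ps ! t < n" using P sps lps nth_mem by blast
  define As where "As = mat n m (\<lambda>(x,t). A $$ (x, ps ! t))"
  have Asc: "As \<in> carrier_mat n m" by (simp add: As_def)
  have colAs: "\<And>t. t < m \<Longrightarrow> col As t = col A (ps ! t)"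
    using A psn by (auto simp: As_def intro!: eq_vecI)
  have key: "(\<Sum>p\<in>P. g p) = (\<Sum>t<m. g (ps!t))" for g
    using sum_set_nth[OF dps, of g] sps lps by simp
  have dist: "distinct (cols As)"
  proof (rule ccontr)
    assume "\<not> distinct (cols As)"
    then obtain t t' where tt: "t \<noteq> t'" "t < m" "t' < m" "cols As ! t = cols As ! t'"
      using Asc by (auto simp: distinct_conv_nth)
    then have ceq: "col A (ps!t) = col A (ps!t')" using colAs Asc by simp
    have ne: "ps ! t \<noteq> ps ! t'" using dps tt lps by (simp add: nth_eq_iff_index_eq)
    define c where "c p = (if p = ps!t then 1 else if p = ps!t' then -1 else (0::'a))" for p
    have "\<forall>x<n. (\<Sum>p\<in>P. c p * A $$ (x,p)) = 0"
    proof (intro allI impI)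
      fix x assume x: "x < n"
      have eqx: "A $$ (x, ps!t) = A $$ (x, ps!t')"
        using ceq x A psn tt by (metis carrier_matD(1) carrier_matD(2) col_def index_vec)
      have inP: "ps!t \<in> P" "ps!t' \<in> P" using sps lps tt nth_mem by blast+
      have "(\<Sum>p\<in>P. c p * A $$ (x,p)) = (\<Sum>p\<in>{ps!t, ps!t'}. c p * A $$ (x,p))"
        by (rule sum.mono_neutral_right[OF fin]) (use inP in \<open>auto simp: c_def\<close>)
      also have "\<dots> = 0" using ne eqx by (simp add: c_def)
      finally show "(\<Sum>p\<in>P. c p * A $$ (x,p)) = 0" .
    qed
    then have "c (ps!t) = 0" using ind unfolding indep_def using sps lps tt nth_mem by blast
    then show False by (simp add: c_def)
  qed
  have li: "lin_indpt (set (cols As))"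
  proof
    assume "lin_dep (set (cols As))"
    then obtain v where v: "v \<in> carrier_vec m" "v \<noteq> 0\<^sub>v m" "As *\<^sub>v v = 0\<^sub>v n"
      using lin_depE[OF Asc _ dist] by blast
    define c where "c (p::nat) = v $ (find_first p ps)" for p
    have "\<forall>x<n. (\<Sum>p\<in>P. c p * A $$ (x,p)) = 0"
    proof (intro allI impI)
      fix x assume x: "x < n"
      have "(\<Sum>p\<in>P. c p * A $$ (x,p)) = (\<Sum>t<m. v $ t * A $$ (x, ps!t))"
        unfolding key c_def using dps lps by (simp add: find_first_unique)
      also have "\<dots> = (As *\<^sub>v v) $ x"
        using x v(1) by (auto simp: As_def mult_mat_vec_def scalar_prod_def atLeast0LessThan
            intro!: sum.cong)
      also have "\<dots> = 0" using v(3) x by simp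
      finally show "(\<Sum>p\<in>P. c p * A $$ (x,p)) = 0" .
    qed
    then have "\<forall>p\<in>P. c p = 0" using ind unfolding indep_def by blast
    then have "\<And>t. t < m \<Longrightarrow> v $ t = 0"
      using sps lps dps unfolding c_def by (metis find_first_unique nth_mem)
    then have "v = 0\<^sub>v m" using v(1) by (intro eq_vecI) auto
    then show False using v(2) by simp
  qed
  have sub: "set (cols As) \<subseteq> set (cols A)"
  proof
    fix z assume "z \<in> set (cols As)"
    then obtain t where "t < m" "z = col As t" using Asc by (auto simp: in_set_conv_nth)
    then have "z = col A (ps!t)" using colAs by simp
    then show "z \<in> set (cols A)" using psn[OF \<open>t<m\<close>] A by (auto simp: in_set_conv_nth intro!: exI[of _ "ps!t"])
  qed
  have "card (set (cols As)) = m" using dist Asc by (simp add: distinct_card)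
  then show ?thesis using rank_ge_card_indpt[OF A sub li] m_def by simp
qed

end





definition formA :: "(nat \<Rightarrow> bit) \<Rightarrow> (nat \<Rightarrow> bit) \<Rightarrow> bit" where
  "formA g h = g 0 * h 0 + g 1 * h 1 + g 2 * h 2 + g 3 * h 3"
definition formB :: "(nat \<Rightarrow> bit) \<Rightarrow> (nat \<Rightarrow> bit) \<Rightarrow> bit" where
  "formB g h = g 0 * h 1 + g 1 * h 0 + g 2 * h 3 + g 3 * h 2"
definition ucol :: "nat \<Rightarrow> nat \<Rightarrow> bit" where "ucol j = (\<lambda>k. U_mat $$ (k,j))"

lemma U_carrier: "U_mat \<in> carrier_mat 4 15" by (simp add: U_mat_def)

lemma prod3:
  assumes X: "X \<in> carrier_mat 4 15" and B: "B \<in> carrier_mat 4 4" and j: "j < 15" and l: "l < 15"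
  shows "(transpose_mat X * B * X) $$ (j,l) = (\<Sum>k<4. X$$(k,j) * (\<Sum>m<4. B$$(k,m) * X$$(m,l)))"
  using assms by (simp add: scalar_prod_def atLeast0LessThan)

lemma lt4: "k < (4::nat) \<longleftrightarrow> k = 0 \<or> k = 1 \<or> k = 2 \<or> k = 3" by auto

lemma sum4: "(\<Sum>k<(4::nat). f k) = f 0 + f 1 + f 2 + (f 3 :: 'a::comm_monoid_add)"
  by (simp add: eval_nat_numeral add.assoc)

lemma entryA: "j < 15 \<Longrightarrow> l < 15 \<Longrightarrow> (transpose_mat U_mat * B1_mat * U_mat) $$ (j,l) = formA (ucol j) (ucol l)"
  by (simp add: prod3[OF U_carrier] B1_mat_def sum4 formA_def ucol_def)

lemma entryB: "j < 15 \<Longrightarrow> l < 15 \<Longrightarrow> (transpose_mat U_mat * B2_mat * U_mat) $$ (j,l) = formB (ucol j) (ucol l)"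
  by (simp add: prod3[OF U_carrier] B2_mat_def sum4 formB_def ucol_def)

lemma dimA: "fst F2R4A = 15" by (simp add: F2R4A_def Gamma_def U_mat_def)
lemma dimB: "fst F2R4B = 15" by (simp add: F2R4B_def Gamma_def U_mat_def)
lemma sndA: "j < 15 \<Longrightarrow> l < 15 \<Longrightarrow> snd F2R4A j l \<longleftrightarrow> formA (ucol j) (ucol l) \<noteq> 0"
  by (simp add: F2R4A_def Gamma_def entryA del: bit_not_zero_iff)
lemma sndB: "j < 15 \<Longrightarrow> l < 15 \<Longrightarrow> snd F2R4B j l \<longleftrightarrow> formB (ucol j) (ucol l) \<noteq> 0"
  by (simp add: F2R4B_def Gamma_def entryB del: bit_not_zero_iff)

definition code :: "(nat \<Rightarrow> bit) \<Rightarrow> nat" where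
  "code g = (let v = (\<Sum>k<4. if g k = 1 then 2^k else 0) in if v = 0 then 15 else v - 1)"

lemma code_props: "code g \<le> 15 \<and> (code g = 15 \<longrightarrow> (\<forall>k<4. g k = 0)) \<and> (code g < 15 \<longrightarrow> (\<forall>k<4. ucol (code g) k = g k))"
  by (cases "g 0"; cases "g 1"; cases "g 2"; cases "g 3")
     (simp_all add: code_def sum4 lt4 ucol_def U_mat_def)


context vec_space begin

lemma rank_sum_prod: "rank (mat n n (\<lambda>(x,y). \<Sum>k<m. p k x * q k y)) \<le> m"
proof (induction m)
  case 0
  have "mat n n (\<lambda>(x,y). \<Sum>k<(0::nat). p k x * q k y) = 0\<^sub>m n n" by (intro eq_matI) auto
  then show ?case by (metis rank_0I le_refl)
next
  case (Suc m)
  define M1 where "M1 = mat n n (\<lambda>(x,y). \<Sum>k<m. p k x * q k y)"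
  define M2 where "M2 = mat n n (\<lambda>(x,y). p m x * q m y)"
  have eq: "mat n n (\<lambda>(x,y). \<Sum>k<Suc m. p k x * q k y) = M1 + M2"
    by (intro eq_matI) (auto simp: M1_def M2_def)
  have c1: "M1 \<in> carrier_mat n n" and c2: "M2 \<in> carrier_mat n n" by (auto simp: M1_def M2_def)
  have "rank M2 \<le> 1" using c2 by (rule rank_le_1_product_entries[where f = "p m" and g = "q m"]) (auto simp: M2_def)
  then show ?case using rank_subadditive[OF c1 c2] Suc eq M1_def by simp
qed

end

lemma id3: "p*p' + (q*r' + r*q') = (q+p)*(q'+p') + (r+p)*(r'+p') + (q+r+p)*(q'+r'+p')" for p q r p' q' r' :: bit
  by (cases p; cases q; cases r; cases p'; cases q'; cases r'; simp add: add_bit_eq_xor mult_bit_eq_and)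


lemma c_h0: "s \<le> 4 \<Longrightarrow> (\<Sum>k<s. v k x * v k y) = formA (\<lambda>k::nat. if k < s then v k x else 0) (\<lambda>k::nat. if k < s then v k y else 0)"
proof -
  assume s: "s \<le> 4"
  have "formA (\<lambda>k::nat. if k < s then v k x else 0) (\<lambda>k::nat. if k < s then v k y else 0)
      = (\<Sum>k<4. if k < s then v k x * v k y else 0)" by (simp add: formA_def sum4)
  also have "\<dots> = (\<Sum>k<s. v k x * v k y)"
    by (rule sum.mono_neutral_cong_right) (use s in auto)
  finally show ?thesis by simp
qed

lemma c_s0h2: "(\<Sum>k<(2::nat). u k x * w k y + w k x * u k y) = formB (\<lambda>k::nat. if k = 0 then u 0 x else if k = 1 then w 0 x else if k = 2 then u 1 x else w 1 x)
   (\<lambda>k::nat. if k = 0 then u 0 y else if k = 1 then w 0 y else if k = 2 then u 1 y else w 1 y)"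
  by (simp add: formB_def eval_nat_numeral add.assoc)

lemma c_h1s2: "(\<Sum>k<(2::nat). v k x * v k y) + (u 0 x * w 0 y + w 0 x * u 0 y) = formA (\<lambda>k::nat. if k = 0 then u 0 x + v 0 x else if k = 1 then w 0 x + v 0 x
       else if k = 2 then u 0 x + w 0 x + v 0 x else v 1 x) (\<lambda>k::nat. if k = 0 then u 0 y + v 0 y else if k = 1 then w 0 y + v 0 y
       else if k = 2 then u 0 y + w 0 y + v 0 y else v 1 y)"
proof -
  have e: "v 0 x * v 0 y + (u 0 x * w 0 y + w 0 x * u 0 y) = (u 0 x + v 0 x) * (u 0 y + v 0 y) + (w 0 x + v 0 x) * (w 0 y + v 0 y) + (u 0 x + w 0 x + v 0 x) * (u 0 y + w 0 y + v 0 y)"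
    by (rule id3)
  have A: "(\<Sum>k<(2::nat). v k x * v k y) = v 0 x * v 0 y + v 1 x * v 1 y" by (simp add: eval_nat_numeral)
  have B: "formA (\<lambda>k::nat. if k = 0 then u 0 x + v 0 x else if k = 1 then w 0 x + v 0 x
       else if k = 2 then u 0 x + w 0 x + v 0 x else v 1 x) (\<lambda>k::nat. if k = 0 then u 0 y + v 0 y else if k = 1 then w 0 y + v 0 y
       else if k = 2 then u 0 y + w 0 y + v 0 y else v 1 y) = (u 0 x + v 0 x) * (u 0 y + v 0 y) + (w 0 x + v 0 x) * (w 0 y + v 0 y) + (u 0 x + w 0 x + v 0 x) * (u 0 y + w 0 y + v 0 y) + v 1 x * v 1 y"
    by (simp add: formA_def)
  show ?thesis unfolding A B e[symmetric] by (simp only: add.assoc add.commute add.left_commute)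
qed

lemma c_h1s1: "(\<Sum>k<(1::nat). v k x * v k y) + (u 0 x * w 0 y + w 0 x * u 0 y) = formA (\<lambda>k::nat. if k = 0 then u 0 x + v 0 x else if k = 1 then w 0 x + v 0 x
       else if k = 2 then u 0 x + w 0 x + v 0 x else 0) (\<lambda>k::nat. if k = 0 then u 0 y + v 0 y else if k = 1 then w 0 y + v 0 y
       else if k = 2 then u 0 y + w 0 y + v 0 y else 0)"
proof -
  have e: "v 0 x * v 0 y + (u 0 x * w 0 y + w 0 x * u 0 y) = (u 0 x + v 0 x) * (u 0 y + v 0 y) + (w 0 x + v 0 x) * (w 0 y + v 0 y) + (u 0 x + w 0 x + v 0 x) * (u 0 y + w 0 y + v 0 y)"
    by (rule id3)
  have A: "(\<Sum>k<(1::nat). v k x * v k y) = v 0 x * v 0 y" by simp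
  have B: "formA (\<lambda>k::nat. if k = 0 then u 0 x + v 0 x else if k = 1 then w 0 x + v 0 x
       else if k = 2 then u 0 x + w 0 x + v 0 x else 0) (\<lambda>k::nat. if k = 0 then u 0 y + v 0 y else if k = 1 then w 0 y + v 0 y
       else if k = 2 then u 0 y + w 0 y + v 0 y else 0) = (u 0 x + v 0 x) * (u 0 y + v 0 y) + (w 0 x + v 0 x) * (w 0 y + v 0 y) + (u 0 x + w 0 x + v 0 x) * (u 0 y + w 0 y + v 0 y)"
    by (simp add: formA_def)
  show ?thesis unfolding A B by (rule e)
qed

lemma c_s0h1: "(\<Sum>k<(1::nat). u k x * w k y + w k x * u k y) = formB (\<lambda>k::nat. if k = 0 then u 0 x else if k = 1 then w 0 x else 0)
   (\<lambda>k::nat. if k = 0 then u 0 y else if k = 1 then w 0 y else 0)"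
  by (simp add: formB_def)

lemma normalize:
  fixes a :: "nat \<Rightarrow> nat \<Rightarrow> bit"
  assumes D: "decomp n a s h v u w" and sh: "s + 2*h \<le> 4"
  shows "(\<exists>W. \<forall>x<n. \<forall>y<n. a x y = formA (W x) (W y)) \<or> (\<exists>W. \<forall>x<n. \<forall>y<n. a x y = formB (W x) (W y))"
proof -
  have D': "a x y = (\<Sum>k<s. v k x * v k y) + (\<Sum>k<h. u k x * w k y + w k x * u k y)" if "x < n" "y < n" for x y
    using D[unfolded decomp_def, rule_format, OF that] .
  consider (h0) "h = 0" "s \<le> 4" | (s0h1) "s = 0" "h = 1" | (s0h2) "s = 0" "h = 2"
    | (h1s1) "h = 1" "s = 1" | (h1s2) "h = 1" "s = 2"
  proof -
    have "h = 0 \<or> (h = 1 \<and> (s = 0 \<or> s = 1 \<or> s = 2)) \<or> (h = 2 \<and> s = 0)" using sh by presburger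
    then show thesis using that sh by auto
  qed
  then show ?thesis
  proof cases
    case h0
    define W where "W = (\<lambda>x. \<lambda>k::nat. if k < s then v k x else 0)"
    have "\<forall>x<n. \<forall>y<n. a x y = formA (W x) (W y)"
    proof (intro allI impI)
      fix x y assume xy: "x < n" "y < n"
      have "a x y = (\<Sum>k<s. v k x * v k y)" using D'[OF xy] h0 by simp
      also have "\<dots> = formA (W x) (W y)" unfolding W_def by (rule c_h0[OF h0(2)])
      finally show "a x y = formA (W x) (W y)" .
    qed
    then show ?thesis by blast
  next
    case s0h1
    define W where "W = (\<lambda>x. \<lambda>k::nat. if k = 0 then u 0 x else if k = 1 then w 0 x else 0)"
    have "\<forall>x<n. \<forall>y<n. a x y = formB (W x) (W y)"
    proof (intro allI impI)
      fix x y assume xy: "x < n" "y < n"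
      have "a x y = (\<Sum>k<(1::nat). u k x * w k y + w k x * u k y)" using D'[OF xy] s0h1 by simp
      also have "\<dots> = formB (W x) (W y)" unfolding W_def by (rule c_s0h1)
      finally show "a x y = formB (W x) (W y)" .
    qed
    then show ?thesis by blast
  next
    case s0h2
    define W where "W = (\<lambda>x. \<lambda>k::nat. if k = 0 then u 0 x else if k = 1 then w 0 x else if k = 2 then u 1 x else w 1 x)"
    have "\<forall>x<n. \<forall>y<n. a x y = formB (W x) (W y)"
    proof (intro allI impI)
      fix x y assume xy: "x < n" "y < n"
      have "a x y = (\<Sum>k<(2::nat). u k x * w k y + w k x * u k y)" using D'[OF xy] s0h2 by simp
      also have "\<dots> = formB (W x) (W y)" unfolding W_def by (rule c_s0h2)
      finally show "a x y = formB (W x) (W y)" .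
    qed
    then show ?thesis by blast
  next
    case h1s1
    define W where "W = (\<lambda>x. \<lambda>k::nat. if k = 0 then u 0 x + v 0 x else if k = 1 then w 0 x + v 0 x
       else if k = 2 then u 0 x + w 0 x + v 0 x else 0)"
    have "\<forall>x<n. \<forall>y<n. a x y = formA (W x) (W y)"
    proof (intro allI impI)
      fix x y assume xy: "x < n" "y < n"
      have "a x y = (\<Sum>k<(1::nat). v k x * v k y) + (u 0 x * w 0 y + w 0 x * u 0 y)" using D'[OF xy] h1s1 by simp
      also have "\<dots> = formA (W x) (W y)" unfolding W_def by (rule c_h1s1)
      finally show "a x y = formA (W x) (W y)" .
    qed
    then show ?thesis by blast
  next
    case h1s2
    define W where "W = (\<lambda>x. \<lambda>k::nat. if k = 0 then u 0 x + v 0 x else if k = 1 then w 0 x + v 0 x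
       else if k = 2 then u 0 x + w 0 x + v 0 x else v 1 x)"
    have "\<forall>x<n. \<forall>y<n. a x y = formA (W x) (W y)"
    proof (intro allI impI)
      fix x y assume xy: "x < n" "y < n"
      have "a x y = (\<Sum>k<(2::nat). v k x * v k y) + (u 0 x * w 0 y + w 0 x * u 0 y)" using D'[OF xy] h1s2 by simp
      also have "\<dots> = formA (W x) (W y)" unfolding W_def by (rule c_h1s2)
      finally show "a x y = formA (W x) (W y)" .
    qed
    then show ?thesis by blast
  qed
qed

lemma blowup_iff:
  fixes form :: "(nat \<Rightarrow> bit) \<Rightarrow> (nat \<Rightarrow> bit) \<Rightarrow> bit"
  assumes F1: "fst F = 15" and F2: "\<And>j l. j < 15 \<Longrightarrow> l < 15 \<Longrightarrow> snd F j l \<longleftrightarrow> form (ucol j) (ucol l) \<noteq> 0"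
  and Z1: "\<And>g h. (\<forall>k<4. g k = 0) \<Longrightarrow> form g h = 0" and Z2: "\<And>g h. (\<forall>k<4. h k = 0) \<Longrightarrow> form g h = 0"
  and C: "\<And>g h g' h'. (\<forall>k<4. g k = g' k) \<Longrightarrow> (\<forall>k<4. h k = h' k) \<Longrightarrow> form g h = form g' h'"
  shows "is_blowup n E (union_K1 F) \<longleftrightarrow> (\<exists>W. \<forall>x<n. \<forall>y<n. x \<noteq> y \<longrightarrow> (E x y \<longleftrightarrow> form (W x) (W y) \<noteq> 0))"
proof
  assume "is_blowup n E (union_K1 F)"
  then obtain f where f1: "\<forall>x<n. f x < 16"
    and f2: "\<forall>x<n. \<forall>y<n. x \<noteq> y \<longrightarrow> (E x y \<longleftrightarrow> f x < 15 \<and> f y < 15 \<and> snd F (f x) (f y))"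
    by (auto simp: is_blowup_def union_K1_def F1)
  define W where "W x = (if f x < 15 then ucol (f x) else (\<lambda>_. 0))" for x
  have "\<forall>x<n. \<forall>y<n. x \<noteq> y \<longrightarrow> (E x y \<longleftrightarrow> form (W x) (W y) \<noteq> 0)"
  proof (intro allI impI)
    fix x y assume xy: "x < n" "y < n" "x \<noteq> y"
    show "E x y \<longleftrightarrow> form (W x) (W y) \<noteq> 0"
    proof (cases "f x < 15 \<and> f y < 15")
      case True
      then show ?thesis using f2 xy F2[of "f x" "f y"] by (simp add: W_def)
    next
      case False
      then have "form (W x) (W y) = 0" using Z1 Z2 by (auto simp: W_def)
      then show ?thesis using f2 xy False by auto
    qed
  qed
  then show "\<exists>W. \<forall>x<n. \<forall>y<n. x \<noteq> y \<longrightarrow> (E x y \<longleftrightarrow> form (W x) (W y) \<noteq> 0)" by blast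
next
  assume "\<exists>W. \<forall>x<n. \<forall>y<n. x \<noteq> y \<longrightarrow> (E x y \<longleftrightarrow> form (W x) (W y) \<noteq> 0)"
  then obtain W where W: "\<forall>x<n. \<forall>y<n. x \<noteq> y \<longrightarrow> (E x y \<longleftrightarrow> form (W x) (W y) \<noteq> 0)" by blast
  define f where "f x = code (W x)" for x
  have cp: "\<And>x. f x \<le> 15" "\<And>x. f x = 15 \<Longrightarrow> \<forall>k<4. W x k = 0" "\<And>x. f x < 15 \<Longrightarrow> \<forall>k<4. ucol (f x) k = W x k"
    using code_props unfolding f_def by blast+
  show "is_blowup n E (union_K1 F)"
    unfolding is_blowup_def
  proof (intro exI[of _ f] conjI allI impI)
    fix x assume "x < n"
    show "f x < fst (union_K1 F)" using cp(1)[of x] by (simp add: union_K1_def F1)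
  next
    fix x y assume xy: "x < n" "y < n" "x \<noteq> y"
    show "E x y \<longleftrightarrow> snd (union_K1 F) (f x) (f y)"
    proof (cases "f x < 15 \<and> f y < 15")
      case True
      then have "form (ucol (f x)) (ucol (f y)) = form (W x) (W y)" using cp(3) by (intro C) auto
      then show ?thesis using True W xy F2[of "f x" "f y"] by (simp add: union_K1_def F1)
    next
      case False
      then have "f x = 15 \<or> f y = 15" using cp(1)[of x] cp(1)[of y] by linarith
      then have "form (W x) (W y) = 0" using cp(2) Z1 Z2 by blast
      then show ?thesis using False W xy by (auto simp: union_K1_def F1)
    qed
  qed
qed

lemma formA_sum: "formA g h = (\<Sum>k<4. g k * h k)" by (simp add: formA_def sum4)
definition sw :: "nat \<Rightarrow> nat" where "sw k = (if k = 0 then 1 else if k = 1 then 0 else if k = 2 then 3 else 2)"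
lemma formB_sum: "formB g h = (\<Sum>k<4. g k * h (sw k))" by (simp add: formB_def sum4 sw_def)

lemma blowA: "is_blowup n E (union_K1 F2R4A) \<longleftrightarrow> (\<exists>W. \<forall>x<n. \<forall>y<n. x \<noteq> y \<longrightarrow> (E x y \<longleftrightarrow> formA (W x) (W y) \<noteq> 0))"
  by (rule blowup_iff[OF dimA sndA]) (auto simp: formA_def lt4)

lemma blowB: "is_blowup n E (union_K1 F2R4B) \<longleftrightarrow> (\<exists>W. \<forall>x<n. \<forall>y<n. x \<noteq> y \<longrightarrow> (E x y \<longleftrightarrow> formB (W x) (W y) \<noteq> 0))"
  by (rule blowup_iff[OF dimB sndB]) (auto simp: formB_def lt4)

lemma mr_upper:
  fixes form :: "(nat \<Rightarrow> bit) \<Rightarrow> (nat \<Rightarrow> bit) \<Rightarrow> bit"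
  assumes sym: "\<And>g h. form g h = form h g" and fs: "\<And>g h. form g h = (\<Sum>k<4. g k * h (\<sigma> k))"
    and W: "\<forall>x<n. \<forall>y<n. x \<noteq> y \<longrightarrow> (E x y \<longleftrightarrow> form (W x) (W y) \<noteq> 0)"
  shows "mr_F2 n E \<le> 4"
proof -
  define A where "A = mat n n (\<lambda>(x,y). form (W x) (W y))"
  have Ac: "A \<in> carrier_mat n n" by (simp add: A_def)
  have At: "transpose_mat A = A" by (intro eq_matI) (auto simp: A_def sym)
  have Ap: "\<forall>i<n. \<forall>j<n. i \<noteq> j \<longrightarrow> (A $$ (i,j) \<noteq> 0 \<longleftrightarrow> E i j)" using W by (auto simp: A_def)
  have "A = mat n n (\<lambda>(x,y). \<Sum>k<4. (\<lambda>k x. W x k) k x * (\<lambda>k y. W y (\<sigma> k)) k y)"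
    by (simp add: A_def fs)
  then have r: "vec_space.rank n A \<le> 4"
    using vec_space.rank_sum_prod[where n = n and m = 4 and p = "\<lambda>k x. W x k" and q = "\<lambda>k y. W y (\<sigma> k)"] by simp
  have "mr_F2 n E \<le> vec_space.rank n A" unfolding mr_F2_def
    by (rule Least_le) (use Ac At Ap in blast)
  then show ?thesis using r by simp
qed

theorem mainTheorem20:
  fixes n :: nat and E :: "nat \<Rightarrow> nat \<Rightarrow> bool"
  assumes "simple_graph n E"
  shows "mr_F2 n E \<le> 4 \<longleftrightarrow>
    (is_blowup n E (union_K1 F2R4A) \<or> is_blowup n E (union_K1 F2R4B))"
proof
  assume "is_blowup n E (union_K1 F2R4A) \<or> is_blowup n E (union_K1 F2R4B)"
  then show "mr_F2 n E \<le> 4"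
  proof
    assume "is_blowup n E (union_K1 F2R4A)"
    then obtain W where W: "\<forall>x<n. \<forall>y<n. x \<noteq> y \<longrightarrow> (E x y \<longleftrightarrow> formA (W x) (W y) \<noteq> 0)" using blowA[THEN iffD1] by blast
    have s1: "\<And>g h. formA g h = formA h g" by (simp add: formA_def mult.commute)
    have s2: "\<And>g h. formA g h = (\<Sum>k<4. g k * h (id k))" by (simp add: formA_sum)
    show ?thesis by (rule mr_upper[OF s1 s2 W])
  next
    assume "is_blowup n E (union_K1 F2R4B)"
    then obtain W where W: "\<forall>x<n. \<forall>y<n. x \<noteq> y \<longrightarrow> (E x y \<longleftrightarrow> formB (W x) (W y) \<noteq> 0)" using blowB[THEN iffD1] by blast
    have s1: "\<And>g h. formB g h = formB h g" by (simp add: formB_def algebra_simps)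
    have s2: "\<And>g h. formB g h = (\<Sum>k<4. g k * h (sw k))" by (simp add: formB_sum)
    show ?thesis by (rule mr_upper[OF s1 s2 W])
  qed
next
  assume le: "mr_F2 n E \<le> 4"
  have sg: "\<forall>x<n. \<forall>y<n. E x y = E y x" using assms by (simp add: simple_graph_def)
  define Q where "Q r = (\<exists>A :: bit mat. A \<in> carrier_mat n n \<and> transpose_mat A = A \<and>
      (\<forall>i<n. \<forall>j<n. i \<noteq> j \<longrightarrow> (A $$ (i,j) \<noteq> 0 \<longleftrightarrow> E i j)) \<and> vec_space.rank n A = r)" for r
  define A0 where "A0 = mat n n (\<lambda>(x,y). if E x y then 1 else (0::bit))"
  have "Q (vec_space.rank n A0)" unfolding Q_def
    by (rule exI[of _ A0]) (auto simp: A0_def sg intro!: eq_matI)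
  then have "Q (LEAST r. Q r)" by (rule LeastI)
  moreover have "(LEAST r. Q r) = mr_F2 n E" unfolding mr_F2_def Q_def by (rule refl)
  ultimately have "Q (mr_F2 n E)" by simp
  then obtain A :: "bit mat" where AA: "A \<in> carrier_mat n n \<and> transpose_mat A = A \<and>
      (\<forall>i<n. \<forall>j<n. i \<noteq> j \<longrightarrow> (A $$ (i,j) \<noteq> 0 \<longleftrightarrow> E i j)) \<and> vec_space.rank n A = mr_F2 n E"
    unfolding Q_def by blast
  note Ac = AA[THEN conjunct1] and At = AA[THEN conjunct2, THEN conjunct1]
    and Ap = AA[THEN conjunct2, THEN conjunct2, THEN conjunct1] and Ar = AA[THEN conjunct2, THEN conjunct2, THEN conjunct2]
  have dA: "dim_row A = n" "dim_col A = n" using Ac by auto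
  have sym: "\<forall>x<n. \<forall>y<n. A $$ (x,y) = A $$ (y,x)"
  proof (intro allI impI)
    fix x y assume xy: "x < n" "y < n"
    have "A $$ (x,y) = transpose_mat A $$ (x,y)" by (simp only: At)
    also have "\<dots> = A $$ (y,x)" by (rule index_transpose_mat(1)) (use xy dA in simp_all)
    finally show "A $$ (x,y) = A $$ (y,x)" .
  qed
  obtain s h v u w P where D: "decomp n (\<lambda>x y. A $$ (x,y)) s h v u w" and P: "P \<subseteq> {..<n}"
    and cP: "card P = s + 2*h" and ind: "indep n (\<lambda>x y. A $$ (x,y)) P"
    using elim[of n "\<lambda>x y. A $$ (x,y)", OF sym] by blast
  have "card P \<le> vec_space.rank n A" by (rule vec_space.indep_rank[OF Ac P ind])
  then have "s + 2*h \<le> 4" using cP Ar le by simp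
  from normalize[OF D this] show "is_blowup n E (union_K1 F2R4A) \<or> is_blowup n E (union_K1 F2R4B)"
  proof
    assume "\<exists>W. \<forall>x<n. \<forall>y<n. A $$ (x,y) = formA (W x) (W y)"
    then obtain W where "\<forall>x<n. \<forall>y<n. A $$ (x,y) = formA (W x) (W y)" by blast
    then have "\<forall>x<n. \<forall>y<n. x \<noteq> y \<longrightarrow> (E x y \<longleftrightarrow> formA (W x) (W y) \<noteq> 0)" using Ap by auto
    then have "\<exists>W. \<forall>x<n. \<forall>y<n. x \<noteq> y \<longrightarrow> (E x y \<longleftrightarrow> formA (W x) (W y) \<noteq> 0)" by blast
    then show ?thesis by (rule disjI1[OF blowA[THEN iffD2]])
  next
    assume "\<exists>W. \<forall>x<n. \<forall>y<n. A $$ (x,y) = formB (W x) (W y)"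
    then obtain W where "\<forall>x<n. \<forall>y<n. A $$ (x,y) = formB (W x) (W y)" by blast
    then have "\<forall>x<n. \<forall>y<n. x \<noteq> y \<longrightarrow> (E x y \<longleftrightarrow> formB (W x) (W y) \<noteq> 0)" using Ap by auto
    then have "\<exists>W. \<forall>x<n. \<forall>y<n. x \<noteq> y \<longrightarrow> (E x y \<longleftrightarrow> formB (W x) (W y) \<noteq> 0)" by blast
    then show ?thesis by (rule disjI2[OF blowB[THEN iffD2]])
  qed
qed

end
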